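(* Let $G_1$ and $G_2$ be two disjoint $(k+1)$-critical hypergraphs with $k\ge2$, let $\tilde e\in E(G_1)$ be an ordinary edge (i.e. $|\tilde e|=2$), let $\tilde v\in V(G_2)$ be arbitrary, and let $s$ be an admissible map for $(\tilde e,G_2,\tilde v)$. Let $G=S(G_1,\tilde e,G_2,\tilde v,s)$ and $G_2'=G[(V(G_2)\setminus\{\tilde v\})\cup\tilde e]$. If $\chi(G_2')\le k$, then $G$ is $(k+1)$-critical and $\tilde e$ is a separating vertex set of $G$ of size $2$.
   Context: A hypergraph is a pair $G=(V,E)$ of finite sets with $E\subseteq 2^V$ and $|e|\ge2$ for all $e\in E$. A coloring requires every edge to contain two vertices of different colors; $\chi$ is the chromatic number. $G$ is $(k+1)$-critical if $\chi(G)=k+1$ but $\chi(H)\le k$ for every proper subhypergraph $H$. $G[X]$ has vertex set $X$ and the edges of $G$ contained in $X$. $\partial_G(v)$ is the set of edges containing $v$. A set $S\subseteq V(G)$ is a separating vertex set if $G$ is the union of two induced subhypergraphs $G_1,G_2$ with $V(G_1)\cap V(G_2)=S$ and $|V(G_i)|>|S|$. Splitting: let $G_1,G_2$ be disjoint hypergraphs, $\tilde e\in E(G_1)$, $\tilde v\in V(G_2)$, and $s:\partial_{G_2}(\tilde v)\to 2^{\tilde e}$ a map (called admissible) with $s(e)\ne\varnothing$ for all $e$ and $\bigcup_{e}s(e)=\tilde e$. Then $S(G_1,\tilde e,G_2,\tilde v,s)$ is the hypergraph with vertex set $V(G_1)\cup(V(G_2)\setminus\{\tilde v\})$ and edge set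 $(E(G_1)\setminus\{\tilde e\})\cup(E(G_2)\setminus\partial_{G_2}(\tilde v))\cup\{(e\setminus\{\tilde v\})\cup s(e): e\in\partial_{G_2}(\tilde v)\}$. *)

theory Defs
  imports Main
begin

type_synonym 'a hypergraph = "'a set \<times> 'a set set"

abbreviation verts :: "'a hypergraph \<Rightarrow> 'a set" where "verts G \<equiv> fst G"
abbreviation edges :: "'a hypergraph \<Rightarrow> 'a set set" where "edges G \<equiv> snd G"

definition hypergraph :: "'a hypergraph \<Rightarrow> bool" where
  "hypergraph G \<longleftrightarrow> finite (verts G) \<and> edges G \<subseteq> Pow (verts G)
     \<and> (\<forall>e\<in>edges G. card e \<ge> 2)"

definition colorable :: "'a hypergraph \<Rightarrow> nat \<Rightarrow> bool" where
  "colorable G k \<longleftrightarrow> (\<exists>f :: 'a \<Rightarrow> nat. (\<forall>v\<in>verts G. f v < k)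
     \<and> (\<forall>e\<in>edges G. \<exists>u\<in>e. \<exists>w\<in>e. f u \<noteq> f w))"

definition chi :: "'a hypergraph \<Rightarrow> nat" where
  "chi G = (LEAST k. colorable G k)"

definition subhypergraph :: "'a hypergraph \<Rightarrow> 'a hypergraph \<Rightarrow> bool" where
  "subhypergraph H G \<longleftrightarrow> hypergraph H \<and> verts H \<subseteq> verts G \<and> edges H \<subseteq> edges G"

definition critical :: "nat \<Rightarrow> 'a hypergraph \<Rightarrow> bool" where
  "critical m G \<longleftrightarrow> hypergraph G \<and> chi G = m
     \<and> (\<forall>H. subhypergraph H G \<and> H \<noteq> G \<longrightarrow> chi H < m)"

definition induced :: "'a hypergraph \<Rightarrow> 'a set \<Rightarrow> 'a hypergraph" where
  "induced G X = (X, {e\<in>edges G. e \<subseteq> X})"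

definition separating :: "'a hypergraph \<Rightarrow> 'a set \<Rightarrow> bool" where
  "separating G S \<longleftrightarrow> (\<exists>X Y. X \<subseteq> verts G \<and> Y \<subseteq> verts G
      \<and> verts G = X \<union> Y \<and> edges G = edges (induced G X) \<union> edges (induced G Y)
      \<and> X \<inter> Y = S \<and> card X > card S \<and> card Y > card S)"

definition incident :: "'a hypergraph \<Rightarrow> 'a \<Rightarrow> 'a set set" where
  "incident G v = {e\<in>edges G. v \<in> e}"

definition admissible :: "'a set \<Rightarrow> 'a hypergraph \<Rightarrow> 'a \<Rightarrow> ('a set \<Rightarrow> 'a set) \<Rightarrow> bool" where
  "admissible et G2 v s \<longleftrightarrow> (\<forall>e\<in>incident G2 v. s e \<subseteq> et \<and> s e \<noteq> {})
      \<and> (\<Union>e\<in>incident G2 v. s e) = et"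

definition splitting :: "'a hypergraph \<Rightarrow> 'a set \<Rightarrow> 'a hypergraph \<Rightarrow> 'a \<Rightarrow> ('a set \<Rightarrow> 'a set)
    \<Rightarrow> 'a hypergraph" where
  "splitting G1 et G2 v s =
    (verts G1 \<union> (verts G2 - {v}),
     (edges G1 - {et}) \<union> (edges G2 - incident G2 v)
       \<union> {(e - {v}) \<union> s e | e. e \<in> incident G2 v})"

end

theory Submission
  imports Defs
begin

lemma two_elems:
  assumes "finite e" "card e \<ge> 2"
  shows "\<exists>u\<in>e. \<exists>w\<in>e. u \<noteq> w"
proof -
  from assms have "e \<noteq> {}" by auto
  then obtain u where u: "u \<in> e" by auto
  have "card (e - {u}) \<ge> 1" using assms u by (simp add: card_Diff_singleton)
  then obtain w where "w \<in> e - {u}" by (metis One_nat_def card.empty ex_in_conv not_one_le_zero)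
  then show ?thesis using u by blast
qed

lemma colorable_card:
  assumes "finite V" "\<forall>e\<in>E. e \<subseteq> V \<and> card e \<ge> 2"
  shows "colorable (V,E) (card V)"
proof -
  obtain f where f: "bij_betw f V {0..<card V}" using ex_bij_betw_finite_nat[OF assms(1)] by blast
  show ?thesis unfolding colorable_def
  proof (intro exI[of _ f] conjI ballI)
    fix x assume "x \<in> verts (V,E)" then show "f x < card V" using f by (auto dest: bij_betwE)
  next
    fix e assume e: "e \<in> edges (V,E)"
    then have "e \<subseteq> V" "card e \<ge> 2" using assms by auto
    moreover have "finite e" using \<open>e \<subseteq> V\<close> assms(1) finite_subset by blast
    ultimately obtain u w where "u \<in> e" "w \<in> e" "u \<noteq> w" using two_elems by blast
    moreover have "inj_on f V" using f bij_betw_def by blast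
    ultimately show "\<exists>u\<in>e. \<exists>w\<in>e. f u \<noteq> f w" using \<open>e \<subseteq> V\<close> by (meson inj_onD subsetD)
  qed
qed

lemma hyp_colorable_ex: "hypergraph G \<Longrightarrow> colorable G (card (verts G))"
  using colorable_card[of "verts G" "edges G"] unfolding hypergraph_def by auto

lemma chi_le: "colorable G n \<Longrightarrow> chi G \<le> n"
  unfolding chi_def by (rule Least_le)

lemma chi_colorable: "colorable G n \<Longrightarrow> colorable G (chi G)"
  unfolding chi_def by (rule LeastI[where P="colorable G"])

lemma colorable_mono: "colorable G n \<Longrightarrow> n \<le> m \<Longrightarrow> colorable G m"
proof -
  assume a: "colorable G n" "n \<le> m"
  then obtain f where "\<forall>v\<in>verts G. f v < n" "\<forall>e\<in>edges G. \<exists>u\<in>e. \<exists>w\<in>e. f u \<noteq> f w"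
    unfolding colorable_def by blast
  then show ?thesis unfolding colorable_def using a(2) by (intro exI[of _ f]) auto
qed

lemma chi_le_colorable: "hypergraph G \<Longrightarrow> chi G \<le> k \<Longrightarrow> colorable G k"
  using hyp_colorable_ex chi_colorable colorable_mono by blast

lemma critical_not_col: "critical (k+1) G \<Longrightarrow> \<not> colorable G k"
  unfolding critical_def using chi_le by fastforce

lemma critical_hyp: "critical m G \<Longrightarrow> hypergraph G"
  unfolding critical_def by simp

lemma critical_del_edge:
  assumes "critical (k+1) G" "e \<in> edges G"
  shows "colorable (verts G, edges G - {e}) k"
proof -
  have h: "hypergraph G" using assms critical_hyp by blast
  let ?H = "(verts G, edges G - {e})"
  have "hypergraph ?H" using h unfolding hypergraph_def by auto
  moreover have "subhypergraph ?H G" using calculation unfolding subhypergraph_def by auto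
  moreover have "?H \<noteq> G" using assms(2) by (metis Diff_iff singletonI snd_conv)
  ultimately have "chi ?H < k+1" using assms(1) unfolding critical_def by blast
  then show ?thesis using chi_le_colorable[OF \<open>hypergraph ?H\<close>] by simp
qed

lemma critical_card:
  assumes "critical (k+1) G" shows "card (verts G) \<ge> k+1"
proof (rule ccontr)
  assume "\<not> card (verts G) \<ge> k+1"
  then have "card (verts G) \<le> k" by simp
  then have "colorable G k" using colorable_mono[OF hyp_colorable_ex[OF critical_hyp[OF assms]]] by blast
  then show False using critical_not_col[OF assms] by blast
qed

lemma critical_no_isolated:
  assumes "critical (k+1) G" "k \<ge> 1" "x \<in> verts G"
  shows "\<exists>e\<in>edges G. x \<in> e"
proof (rule ccontr)
  assume nx: "\<not> (\<exists>e\<in>edges G. x \<in> e)"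
  have h: "hypergraph G" using assms critical_hyp by blast
  let ?H = "(verts G - {x}, edges G)"
  have "hypergraph ?H" using h nx unfolding hypergraph_def by auto
  moreover have "subhypergraph ?H G" using calculation unfolding subhypergraph_def by auto
  moreover have "?H \<noteq> G" using assms(3) by (metis Diff_iff fst_conv singletonI)
  ultimately have "chi ?H < k+1" using assms(1) unfolding critical_def by blast
  then have "colorable ?H k" using chi_le_colorable[OF \<open>hypergraph ?H\<close>] by simp
  then obtain f where f: "\<forall>y\<in>verts G - {x}. f y < k" "\<forall>e\<in>edges G. \<exists>u\<in>e. \<exists>w\<in>e. f u \<noteq> f w"
    unfolding colorable_def by auto
  have "colorable G k" unfolding colorable_def
  proof (intro exI[of _ "f(x:=0)"] conjI ballI)
    fix y assume "y \<in> verts G" then show "(f(x:=0)) y < k" using f(1) assms(2) by auto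
  next
    fix e assume "e \<in> edges G"
    then have "x \<notin> e" using nx by blast
    from f(2) \<open>e \<in> edges G\<close> obtain u w where uw: "u\<in>e" "w\<in>e" "f u \<noteq> f w" by blast
    then have "u \<noteq> x" "w \<noteq> x" using \<open>x \<notin> e\<close> by auto
    then show "\<exists>u\<in>e. \<exists>w\<in>e. (f(x:=0)) u \<noteq> (f(x:=0)) w" using uw by auto
  qed
  then show False using critical_not_col[OF assms(1)] by blast
qed

definition sw :: "nat \<Rightarrow> nat \<Rightarrow> nat \<Rightarrow> nat" where
  "sw a b x = (if x = a then b else if x = b then a else x)"

lemma sw_a[simp]: "sw a b a = b" by (simp add: sw_def)
lemma sw_b[simp]: "sw a b b = a" by (simp add: sw_def)
lemma sw_other: "x \<noteq> a \<Longrightarrow> x \<noteq> b \<Longrightarrow> sw a b x = x" by (simp add: sw_def)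
lemma sw_inj: "inj (sw a b)" unfolding inj_def sw_def by auto
lemma sw_bound: "x < k \<Longrightarrow> a < k \<Longrightarrow> b < k \<Longrightarrow> sw a b x < k" by (simp add: sw_def)

lemma noncol_transfer:
  assumes "\<exists>u\<in>e. \<exists>w\<in>e. f u \<noteq> f w" "inj \<pi>" "\<forall>y\<in>e. \<phi> y \<in> e' \<and> g (\<phi> y) = \<pi> (f y)"
  shows "\<exists>u\<in>e'. \<exists>w\<in>e'. g u \<noteq> g w"
proof -
  obtain u w where uw: "u \<in> e" "w \<in> e" "f u \<noteq> f w" using assms(1) by blast
  then have "\<pi> (f u) \<noteq> \<pi> (f w)" using assms(2) by (metis injD)
  then have "g (\<phi> u) \<noteq> g (\<phi> w)" using assms(3) uw by simp
  moreover have "\<phi> u \<in> e'" "\<phi> w \<in> e'" using assms(3) uw by auto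
  ultimately show ?thesis by blast
qed

lemma lift_G2:
  assumes h2: "hypergraph G2" and adm: "admissible et G2 v s"
    and fb: "\<forall>x\<in>verts G2 - {v}. f x < k" and c: "c < k"
    and fe: "\<forall>e\<in>edges G2. v \<notin> e \<longrightarrow> (\<exists>u\<in>e. \<exists>w\<in>e. f u \<noteq> f w)"
    and fn: "\<forall>e\<in>incident G2 v. \<exists>u\<in>(e-{v}) \<union> s e. \<exists>w\<in>(e-{v}) \<union> s e. f u \<noteq> f w"
    and fc: "\<forall>y\<in>et. f y = c"
  shows "colorable G2 k"
  unfolding colorable_def
proof (intro exI[of _ "f(v:=c)"] conjI ballI)
  fix x assume "x \<in> verts G2" then show "(f(v:=c)) x < k" using fb c by auto
next
  fix e assume e: "e \<in> edges G2"
  show "\<exists>u\<in>e. \<exists>w\<in>e. (f(v:=c)) u \<noteq> (f(v:=c)) w"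
  proof (cases "v \<in> e")
    case False
    show ?thesis
      by (rule noncol_transfer[where f=f and \<pi>=id and \<phi>=id]) (use fe e False in auto)
  next
    case True
    then have eI: "e \<in> incident G2 v" using e unfolding incident_def by auto
    then have se: "s e \<subseteq> et" using adm unfolding admissible_def by auto
    show ?thesis
    proof (rule noncol_transfer[where f=f and \<pi>=id and \<phi>="\<lambda>y. if y \<in> s e then v else y"])
      show "\<exists>u\<in>(e-{v}) \<union> s e. \<exists>w\<in>(e-{v}) \<union> s e. f u \<noteq> f w" using fn eI by blast
      show "inj id" by simp
      show "\<forall>y\<in>(e-{v}) \<union> s e. (if y \<in> s e then v else y) \<in> e \<and>
          (f(v:=c)) (if y \<in> s e then v else y) = id (f y)"
        using True se fc by auto
    qed
  qed
qed

lemma mono_et: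
  assumes crit: "critical (k+1) G1" and et: "et \<in> edges G1"
    and fb: "\<forall>x\<in>verts G1. f x < k"
    and fe: "\<forall>e\<in>edges G1 - {et}. \<exists>u\<in>e. \<exists>w\<in>e. f u \<noteq> f w"
    and a: "a \<in> et"
  shows "\<forall>y\<in>et. f y = f a"
proof (rule ccontr)
  assume "\<not> (\<forall>y\<in>et. f y = f a)"
  then obtain y where y: "y \<in> et" "f y \<noteq> f a" by blast
  have "colorable G1 k" unfolding colorable_def
  proof (intro exI[of _ f] conjI ballI)
    fix x assume "x \<in> verts G1" then show "f x < k" using fb by auto
  next
    fix e assume "e \<in> edges G1"
    then show "\<exists>u\<in>e. \<exists>w\<in>e. f u \<noteq> f w" using fe y a by (cases "e = et") auto
  qed
  then show False using critical_not_col[OF crit] by blast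
qed


theorem theorem16:
  fixes G1 G2 :: "'a hypergraph" and et :: "'a set" and v :: 'a
    and s :: "'a set \<Rightarrow> 'a set" and k :: nat
  assumes "k \<ge> 2"
    and "critical (k + 1) G1" and "critical (k + 1) G2"
    and "verts G1 \<inter> verts G2 = {}"
    and "et \<in> edges G1" and "card et = 2"
    and "v \<in> verts G2"
    and "admissible et G2 v s"
    and "chi (induced (splitting G1 et G2 v s) ((verts G2 - {v}) \<union> et)) \<le> k"
  shows "critical (k + 1) (splitting G1 et G2 v s)
    \<and> separating (splitting G1 et G2 v s) et \<and> card et = 2"
proof -
  note crit1 = assms(2) and crit2 = assms(3) and disj = assms(4) and et = assms(5)
  have h1: "hypergraph G1" and h2: "hypergraph G2" using crit1 crit2 critical_hyp by blast+
  define I where "I = incident G2 v"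
  define N where "N = {(e - {v}) \<union> s e | e. e \<in> I}"
  define G where "G = splitting G1 et G2 v s"
  define X2 where "X2 = (verts G2 - {v}) \<union> et"
  have VG: "verts G = verts G1 \<union> (verts G2 - {v})"
    and EG: "edges G = (edges G1 - {et}) \<union> (edges G2 - I) \<union> N"
    by (simp_all add: G_def splitting_def I_def N_def)
  have fin1: "finite (verts G1)" and fin2: "finite (verts G2)"
    using h1 h2 unfolding hypergraph_def by auto
  have E1: "\<forall>e\<in>edges G1. e \<subseteq> verts G1 \<and> card e \<ge> 2" using h1 unfolding hypergraph_def by auto
  have E2: "\<forall>e\<in>edges G2. e \<subseteq> verts G2 \<and> card e \<ge> 2" using h2 unfolding hypergraph_def by auto
  have et1: "et \<subseteq> verts G1" using E1 et by auto
  have adm1: "\<forall>e\<in>I. s e \<subseteq> et \<and> s e \<noteq> {}" and adm2: "(\<Union>e\<in>I. s e) = et"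
    using assms(8) unfolding admissible_def I_def by auto
  have Isub: "\<forall>e\<in>I. e \<in> edges G2 \<and> v \<in> e" unfolding I_def incident_def by auto
  obtain a b where ab: "et = {a,b}" "a \<noteq> b" using card_2_iff[THEN iffD1, OF assms(6)] by blast
  have Ine: "I \<noteq> {}" using adm2 ab by auto
  have newsub: "\<forall>e\<in>I. (e - {v}) \<union> s e \<subseteq> X2" using adm1 Isub E2 unfolding X2_def by blast
  have newcard: "card ((e - {v}) \<union> s e) \<ge> 2" if eI: "e \<in> I" for e
  proof -
    have "e \<subseteq> verts G2" "card e \<ge> 2" using Isub E2 eI by auto
    then have fe: "finite e" using fin2 finite_subset by blast
    have "card (e - {v}) \<ge> 1" using \<open>card e \<ge> 2\<close> Isub eI fe by (simp add: card_Diff_singleton)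
    moreover have fse: "finite (s e)" using adm1 eI ab by (metis finite.emptyI finite.insertI finite_subset)
    moreover have "card (s e) \<ge> 1" using adm1 eI fse
      by (metis One_nat_def Suc_leI card_gt_0_iff)
    moreover have "(e - {v}) \<inter> s e = {}" using adm1 eI et1 disj \<open>e \<subseteq> verts G2\<close> by blast
    ultimately show ?thesis using fe by (simp add: card_Un_disjoint)
  qed
  have X2G: "X2 \<subseteq> verts G" unfolding X2_def VG using et1 by auto
  have EGX2: "\<forall>x\<in>(edges G2 - I) \<union> N. x \<subseteq> X2"
  proof
    fix x assume "x \<in> (edges G2 - I) \<union> N"
    then show "x \<subseteq> X2"
    proof
      assume "x \<in> edges G2 - I"
      then have "x \<subseteq> verts G2" "v \<notin> x" using E2 unfolding I_def incident_def by auto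
      then show ?thesis unfolding X2_def by auto
    next
      assume "x \<in> N" then show ?thesis using newsub unfolding N_def by auto
    qed
  qed
  have NX2: "\<forall>x\<in>N. x \<subseteq> X2" using EGX2 by simp
  have hG: "hypergraph G" unfolding hypergraph_def
  proof (intro conjI)
    show "finite (verts G)" using fin1 fin2 VG by simp
    show "edges G \<subseteq> Pow (verts G)"
    proof
      fix x assume x: "x \<in> edges G"
      show "x \<in> Pow (verts G)"
      proof (cases "x \<in> edges G1 - {et}")
        case True then have "x \<subseteq> verts G1" using E1 by blast
        then show ?thesis using VG by auto
      next
        case False then have "x \<in> (edges G2 - I) \<union> N" using x EG by blast
        then have "x \<subseteq> X2" using EGX2 by blast
        then show ?thesis using X2G by blast
      qed
    qed
    show "\<forall>e\<in>edges G. 2 \<le> card e"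
    proof
      fix x assume x: "x \<in> edges G"
      then consider "x \<in> edges G1 - {et}" | "x \<in> edges G2 - I" | "x \<in> N" using EG by blast
      then show "2 \<le> card x"
      proof cases
        case 1 then show ?thesis using E1 by blast
      next
        case 2 then show ?thesis using E2 by blast
      next
        case 3 then obtain e where "e \<in> I" "x = (e - {v}) \<union> s e" unfolding N_def by blast
        then show ?thesis using newcard by blast
      qed
    qed
  qed
  have EGsub: "\<forall>e\<in>edges G. e \<subseteq> verts G" using hG unfolding hypergraph_def by auto
  have notcol: "\<not> colorable G k"
  proof
    assume "colorable G k"
    then obtain f where fb: "\<forall>x\<in>verts G. f x < k" and fe: "\<forall>e\<in>edges G. \<exists>u\<in>e. \<exists>w\<in>e. f u \<noteq> f w"
      unfolding colorable_def by blast
    have "\<forall>y\<in>et. f y = f a"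
      by (rule mono_et[OF crit1 et]) (use fb fe VG EG ab in auto)
    have "colorable G2 k"
    proof (rule lift_G2[OF h2 assms(8), where f=f and c="f a"])
      show "\<forall>x\<in>verts G2 - {v}. f x < k" using fb VG by auto
      show "f a < k" using fb VG et1 ab by auto
      show "\<forall>e\<in>edges G2. v \<notin> e \<longrightarrow> (\<exists>u\<in>e. \<exists>w\<in>e. f u \<noteq> f w)"
        using fe unfolding EG I_def incident_def by auto
      show "\<forall>e\<in>incident G2 v. \<exists>u\<in>(e-{v}) \<union> s e. \<exists>w\<in>(e-{v}) \<union> s e. f u \<noteq> f w"
        using fe unfolding EG N_def I_def by blast
      show "\<forall>y\<in>et. f y = f a" by fact
    qed
    then show False using critical_not_col[OF crit2] by blast
  qed
  have finX2: "finite X2" using X2G hG unfolding hypergraph_def using finite_subset by blast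
  have hX: "hypergraph (induced G X2)" unfolding hypergraph_def induced_def
    using finX2 hG unfolding hypergraph_def by auto
  have "colorable (induced G X2) k"
    using chi_le_colorable[OF hX] assms(9) unfolding G_def X2_def by blast
  then obtain g where gb: "\<forall>x\<in>X2. g x < k"
      and ge: "\<forall>x\<in>edges G. x \<subseteq> X2 \<longrightarrow> (\<exists>u\<in>x. \<exists>w\<in>x. g u \<noteq> g w)"
    unfolding colorable_def induced_def by auto
  have etX2: "et \<subseteq> X2" unfolding X2_def by auto
  have gab: "g a \<noteq> g b"
  proof
    assume eq: "g a = g b"
    have "colorable G2 k"
    proof (rule lift_G2[OF h2 assms(8), where f=g and c="g a"])
      show "\<forall>x\<in>verts G2 - {v}. g x < k" using gb X2_def by auto
      show "g a < k" using gb etX2 ab by auto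
      show "\<forall>e\<in>edges G2. v \<notin> e \<longrightarrow> (\<exists>u\<in>e. \<exists>w\<in>e. g u \<noteq> g w)"
      proof (intro ballI impI)
        fix e assume e: "e \<in> edges G2" "v \<notin> e"
        then have "e \<in> edges G2 - I" unfolding I_def incident_def by auto
        then have "e \<in> edges G" "e \<subseteq> X2" using EGX2 by (auto simp: EG)
        then show "\<exists>u\<in>e. \<exists>w\<in>e. g u \<noteq> g w" using ge by blast
      qed
      show "\<forall>e\<in>incident G2 v. \<exists>u\<in>(e-{v}) \<union> s e. \<exists>w\<in>(e-{v}) \<union> s e. g u \<noteq> g w"
      proof
        fix e assume "e \<in> incident G2 v"
        then have "(e-{v}) \<union> s e \<in> N" unfolding N_def I_def by blast
        then have nN: "(e-{v}) \<union> s e \<in> N" .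
        then have "(e-{v}) \<union> s e \<in> edges G" by (simp add: EG)
        moreover have "(e-{v}) \<union> s e \<subseteq> X2" using bspec[OF NX2 nN] .
        ultimately show "\<exists>u\<in>(e-{v}) \<union> s e. \<exists>w\<in>(e-{v}) \<union> s e. g u \<noteq> g w" using ge by blast
      qed
      show "\<forall>y\<in>et. g y = g a" using ab eq by auto
    qed
    then show False using critical_not_col[OF crit2] by blast
  qed
  obtain f0 where f0b: "\<forall>x\<in>verts G1. f0 x < k"
      and f0e: "\<forall>e\<in>edges G1 - {et}. \<exists>u\<in>e. \<exists>w\<in>e. f0 u \<noteq> f0 w"
    using critical_del_edge[OF crit1 et] unfolding colorable_def by auto
  have f0c: "\<forall>y\<in>et. f0 y = f0 a" by (rule mono_et[OF crit1 et f0b f0e]) (use ab in auto)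
  have f0a: "f0 a < k" using f0b et1 ab by auto
  have caseB: "colorable (verts G, edges G - {e0}) k"
    if e0': "e0' \<in> edges G2" and c1: "\<forall>x\<in>edges G2 - I. x \<noteq> e0 \<longrightarrow> x \<noteq> e0'"
      and c2: "\<forall>e\<in>I. (e-{v}) \<union> s e \<noteq> e0 \<longrightarrow> e \<noteq> e0'" for e0 e0'
  proof -
    obtain f2 where f2b: "\<forall>x\<in>verts G2. f2 x < k"
        and f2e: "\<forall>e\<in>edges G2 - {e0'}. \<exists>u\<in>e. \<exists>w\<in>e. f2 u \<noteq> f2 w"
      using critical_del_edge[OF crit2 e0'] unfolding colorable_def by auto
    define \<pi> where "\<pi> = sw (f2 v) (f0 a)"
    have \<pi>i: "inj \<pi>" unfolding \<pi>_def by (rule sw_inj)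
    have \<pi>v: "\<pi> (f2 v) = f0 a" unfolding \<pi>_def by simp
    have \<pi>k: "\<pi> x < k" if "x < k" for x
      unfolding \<pi>_def using sw_bound[OF that _ f0a] f2b assms(7) by blast
    define h where "h = (\<lambda>x. if x \<in> verts G1 then f0 x else \<pi> (f2 x))"
    have hV2: "h y = \<pi> (f2 y)" if "y \<in> verts G2" for y using that disj unfolding h_def by auto
    show ?thesis unfolding colorable_def
    proof (intro exI[of _ h] conjI ballI)
      fix x assume "x \<in> verts (verts G, edges G - {e0})"
      then have "x \<in> verts G1 \<or> x \<in> verts G2" using VG by auto
      then show "h x < k" using f0b f2b \<pi>k unfolding h_def by auto
    next
      fix x assume x: "x \<in> edges (verts G, edges G - {e0})"
      then have xn: "x \<noteq> e0" "x \<in> edges G" by auto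
      then consider "x \<in> edges G1 - {et}" | "x \<in> edges G2 - I" | "x \<in> N" using EG by blast
      then show "\<exists>u\<in>x. \<exists>w\<in>x. h u \<noteq> h w"
      proof cases
        case 1
        then have "x \<subseteq> verts G1" using E1 by blast
        show ?thesis
          by (rule noncol_transfer[where f=f0 and \<pi>=id and \<phi>=id])
             (use 1 f0e \<open>x \<subseteq> verts G1\<close> in \<open>auto simp: h_def\<close>)
      next
        case 2
        then have "x \<noteq> e0'" using c1 xn by blast
        then have nc: "\<exists>u\<in>x. \<exists>w\<in>x. f2 u \<noteq> f2 w" using f2e 2 by blast
        have "x \<subseteq> verts G2" using E2 2 by blast
        show ?thesis
          by (rule noncol_transfer[where f=f2 and \<pi>=\<pi> and \<phi>=id])
             (use nc \<pi>i hV2 \<open>x \<subseteq> verts G2\<close> in auto)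
      next
        case 3
        then obtain e where eI: "e \<in> I" and xe: "x = (e - {v}) \<union> s e" unfolding N_def by blast
        then have "e \<noteq> e0'" using c2 xn by blast
        then have nc: "\<exists>u\<in>e. \<exists>w\<in>e. f2 u \<noteq> f2 w" using f2e eI Isub by blast
        obtain p where p: "p \<in> s e" using adm1 eI by blast
        have pet: "p \<in> et" using adm1 eI p by blast
        then have hp: "h p = f0 a" using f0c et1 unfolding h_def by auto
        have eV2: "e \<subseteq> verts G2" using E2 Isub eI by blast
        show ?thesis
        proof (rule noncol_transfer[where f=f2 and \<pi>=\<pi> and \<phi>="\<lambda>y. if y = v then p else y"])
          show "\<exists>u\<in>e. \<exists>w\<in>e. f2 u \<noteq> f2 w" by (rule nc)
          show "inj \<pi>" by (rule \<pi>i)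
          show "\<forall>y\<in>e. (if y = v then p else y) \<in> x \<and> h (if y = v then p else y) = \<pi> (f2 y)"
          proof
            fix y assume y: "y \<in> e"
            show "(if y = v then p else y) \<in> x \<and> h (if y = v then p else y) = \<pi> (f2 y)"
            proof (cases "y = v")
              case True then show ?thesis using p hp \<pi>v xe by simp
            next
              case False then show ?thesis using y xe hV2 eV2 by auto
            qed
          qed
        qed
      qed
    qed
  qed
  have caseA: "colorable (verts G, edges G - {e0}) k" if e01: "e0 \<in> edges G1 - {et}" for e0
  proof -
    have e0E: "e0 \<in> edges G1" using e01 by blast
    obtain f1 where f1b: "\<forall>x\<in>verts G1. f1 x < k"
        and f1e: "\<forall>e\<in>edges G1 - {e0}. \<exists>u\<in>e. \<exists>w\<in>e. f1 u \<noteq> f1 w"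
      using critical_del_edge[OF crit1 e0E] unfolding colorable_def by auto
    have "et \<in> edges G1 - {e0}" using et e01 by blast
    then have "\<exists>u\<in>et. \<exists>w\<in>et. f1 u \<noteq> f1 w" using f1e by blast
    then have f1ab: "f1 a \<noteq> f1 b" using ab by auto
    define p where "p = sw (g a) (f1 a) (g b)"
    define \<pi> where "\<pi> = sw p (f1 b) \<circ> sw (g a) (f1 a)"
    have "p \<noteq> f1 a"
    proof
      assume "p = f1 a"
      then have "sw (g a) (f1 a) (g b) = sw (g a) (f1 a) (g a)" unfolding p_def by simp
      then have "g b = g a" using sw_inj by (metis injD)
      then show False using gab by simp
    qed
    then have \<pi>a: "\<pi> (g a) = f1 a" unfolding \<pi>_def using f1ab by (simp add: sw_other)
    have \<pi>b: "\<pi> (g b) = f1 b" unfolding \<pi>_def p_def by simp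
    have \<pi>i: "inj \<pi>" unfolding \<pi>_def by (intro inj_compose sw_inj)
    have ga: "g a < k" "g b < k" using gb etX2 ab by auto
    have fa: "f1 a < k" "f1 b < k" using f1b et1 ab by auto
    have pk: "p < k" unfolding p_def using sw_bound ga fa by blast
    have \<pi>k: "\<pi> x < k" if "x < k" for x
      unfolding \<pi>_def using sw_bound that ga fa pk by simp
    define h where "h = (\<lambda>x. if x \<in> verts G1 then f1 x else \<pi> (g x))"
    have hX2: "h y = \<pi> (g y)" if "y \<in> X2" for y
    proof (cases "y \<in> et")
      case True then show ?thesis using ab \<pi>a \<pi>b et1 unfolding h_def by auto
    next
      case False then have "y \<in> verts G2" using that X2_def by auto
      then show ?thesis using disj unfolding h_def by auto
    qed
    show ?thesis unfolding colorable_def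
    proof (intro exI[of _ h] conjI ballI)
      fix x assume "x \<in> verts (verts G, edges G - {e0})"
      then have "x \<in> verts G1 \<or> x \<in> X2" using VG X2_def by auto
      then show "h x < k" using f1b gb \<pi>k hX2 unfolding h_def by auto
    next
      fix x assume x: "x \<in> edges (verts G, edges G - {e0})"
      then have xn: "x \<noteq> e0" "x \<in> edges G" by auto
      show "\<exists>u\<in>x. \<exists>w\<in>x. h u \<noteq> h w"
      proof (cases "x \<in> edges G1 - {et}")
        case True
        then have "x \<subseteq> verts G1" using E1 by blast
        have "x \<in> edges G1 - {e0}" using True xn by blast
        then have nc: "\<exists>u\<in>x. \<exists>w\<in>x. f1 u \<noteq> f1 w" using f1e by blast
        show ?thesis
          by (rule noncol_transfer[where f=f1 and \<pi>=id and \<phi>=id])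
             (use nc \<open>x \<subseteq> verts G1\<close> in \<open>auto simp: h_def\<close>)
      next
        case False
        then have "x \<in> (edges G2 - I) \<union> N" using xn EG by blast
        then have xX: "x \<subseteq> X2" using EGX2 by blast
        then have nc: "\<exists>u\<in>x. \<exists>w\<in>x. g u \<noteq> g w" using ge xn by blast
        show ?thesis
          by (rule noncol_transfer[where f=g and \<pi>=\<pi> and \<phi>=id])
             (use nc \<pi>i hX2 xX in auto)
      qed
    qed
  qed
  have key: "colorable (verts G, edges G - {e0}) k" if e0: "e0 \<in> edges G" for e0
  proof -
    consider "e0 \<in> edges G1 - {et}" | "e0 \<in> edges G2 - I" | "e0 \<in> N" using e0 EG by blast
    then show ?thesis
    proof cases
      case 1 then show ?thesis by (rule caseA)
    next
      case 2
      show ?thesis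
      proof (rule caseB[of e0])
        show "e0 \<in> edges G2" using 2 by blast
        show "\<forall>x\<in>edges G2 - I. x \<noteq> e0 \<longrightarrow> x \<noteq> e0" by blast
        show "\<forall>e\<in>I. (e-{v}) \<union> s e \<noteq> e0 \<longrightarrow> e \<noteq> e0" using 2 by blast
      qed
    next
      case 3
      then obtain e1 where e1: "e1 \<in> I" "e0 = (e1 - {v}) \<union> s e1" unfolding N_def by blast
      show ?thesis
      proof (rule caseB[of e1])
        show "e1 \<in> edges G2" using e1 Isub by blast
        show "\<forall>x\<in>edges G2 - I. x \<noteq> e0 \<longrightarrow> x \<noteq> e1" using e1 by blast
        show "\<forall>e\<in>I. (e-{v}) \<union> s e \<noteq> e0 \<longrightarrow> e \<noteq> e1" using e1 by blast
      qed
    qed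
  qed
  obtain e1 where e1: "e1 \<in> I" using Ine by blast
  define e0 where "e0 = (e1 - {v}) \<union> s e1"
  have e0N: "e0 \<in> N" unfolding e0_def N_def using e1 by blast
  then have e0G: "e0 \<in> edges G" by (simp add: EG)
  have "card e0 \<ge> 2" unfolding e0_def using newcard e1 by blast
  moreover have "finite e0"
  proof -
    have "finite (verts G)" using hG unfolding hypergraph_def by blast
    moreover have "e0 \<subseteq> verts G" using EGsub e0G by blast
    ultimately show ?thesis by (rule rev_finite_subset)
  qed
  ultimately obtain u w where uw: "u \<in> e0" "w \<in> e0" "u \<noteq> w" using two_elems by blast
  obtain f where fb: "\<forall>x\<in>verts G. f x < k"
      and fe: "\<forall>e\<in>edges G - {e0}. \<exists>u\<in>e. \<exists>w\<in>e. f u \<noteq> f w"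
    using key[OF e0G] unfolding colorable_def by auto
  have colk1: "colorable G (k+1)" unfolding colorable_def
  proof (intro exI[of _ "f(u:=k)"] conjI ballI)
    fix x assume "x \<in> verts G" then show "(f(u:=k)) x < k+1" using fb by auto
  next
    fix x assume x: "x \<in> edges G"
    show "\<exists>p\<in>x. \<exists>q\<in>x. (f(u:=k)) p \<noteq> (f(u:=k)) q"
    proof (cases "x = e0")
      case True
      have "w \<in> verts G" using uw e0G EGsub by blast
      then have "f w < k" using fb by blast
      then show ?thesis using True uw by (intro bexI[of _ u] bexI[of _ w]) auto
    next
      case False
      then obtain p q where pq: "p \<in> x" "q \<in> x" "f p \<noteq> f q" using fe x by blast
      have "p \<in> verts G" "q \<in> verts G" using pq x EGsub by blast+
      then have "f p < k" "f q < k" using fb by blast+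
      then have "(f(u:=k)) p \<noteq> (f(u:=k)) q" using pq(3) by (cases "p = u"; cases "q = u") auto
      then show ?thesis using pq by blast
    qed
  qed
  have chiG: "chi G = k+1"
  proof -
    have "chi G \<le> k+1" using chi_le[OF colk1] .
    moreover have "\<not> chi G \<le> k" using chi_le_colorable[OF hG] notcol by blast
    ultimately show ?thesis by simp
  qed
  have noiso: "\<exists>e\<in>edges G. x \<in> e" if x: "x \<in> verts G" for x
  proof -
    have k1: "k \<ge> 1" using assms(1) by simp
    from x VG have "x \<in> verts G1 \<or> x \<in> verts G2 - {v}" by auto
    then show ?thesis
    proof
      assume xv: "x \<in> verts G1"
      obtain e where e: "e \<in> edges G1" "x \<in> e" using critical_no_isolated[OF crit1 k1 xv] by blast
      show ?thesis
      proof (cases "e = et")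
        case False then have "e \<in> edges G" using e by (simp add: EG)
        then show ?thesis using e by blast
      next
        case True
        then have "x \<in> (\<Union>e\<in>I. s e)" using adm2 e by simp
        then obtain e' where e': "e' \<in> I" "x \<in> s e'" by blast
        then have "(e' - {v}) \<union> s e' \<in> N" unfolding N_def by blast
        then have "(e' - {v}) \<union> s e' \<in> edges G" by (simp add: EG)
        then show ?thesis using e' by blast
      qed
    next
      assume xv: "x \<in> verts G2 - {v}"
      then have xv2: "x \<in> verts G2" by blast
      obtain e where e: "e \<in> edges G2" "x \<in> e" using critical_no_isolated[OF crit2 k1 xv2] by blast
      show ?thesis
      proof (cases "v \<in> e")
        case False then have "e \<in> edges G2 - I" using e unfolding I_def incident_def by auto
        then have "e \<in> edges G" by (simp add: EG)
        then show ?thesis using e by blast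
      next
        case True
        then have eI: "e \<in> I" using e unfolding I_def incident_def by auto
        then have "(e - {v}) \<union> s e \<in> N" unfolding N_def by blast
        then have "(e - {v}) \<union> s e \<in> edges G" by (simp add: EG)
        moreover have "x \<in> (e - {v}) \<union> s e" using e xv by blast
        ultimately show ?thesis by (rule bexI[rotated])
      qed
    qed
  qed
  have critG: "critical (k+1) G" unfolding critical_def
  proof (intro conjI allI impI)
    show "hypergraph G" by (rule hG)
    show "chi G = k+1" by (rule chiG)
    fix H assume H: "subhypergraph H G \<and> H \<noteq> G"
    then have hH: "hypergraph H" and HV: "verts H \<subseteq> verts G" and HE: "edges H \<subseteq> edges G"
      unfolding subhypergraph_def by auto
    show "chi H < k+1"
    proof (cases "edges H = edges G")
      case True
      have "verts H \<noteq> verts G" using H True by (metis prod_eqI)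
      then obtain x where x: "x \<in> verts G" "x \<notin> verts H" using HV by blast
      obtain e where e: "e \<in> edges G" "x \<in> e" using noiso[OF x(1)] by blast
      then have "e \<in> edges H" using True by simp
      then have "e \<subseteq> verts H" using hH unfolding hypergraph_def by blast
      then show ?thesis using e x by blast
    next
      case False
      then obtain e0 where e0: "e0 \<in> edges G" "e0 \<notin> edges H" using HE by blast
      obtain f where fb: "\<forall>x\<in>verts G. f x < k"
          and fe: "\<forall>e\<in>edges G - {e0}. \<exists>u\<in>e. \<exists>w\<in>e. f u \<noteq> f w"
        using key[OF e0(1)] unfolding colorable_def by auto
      have "colorable H k" unfolding colorable_def
      proof (intro exI[of _ f] conjI ballI)
        fix x assume "x \<in> verts H" then show "f x < k" using fb HV by blast
      next
        fix e assume "e \<in> edges H"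
        then have "e \<in> edges G - {e0}" using HE e0 by blast
        then show "\<exists>u\<in>e. \<exists>w\<in>e. f u \<noteq> f w" using fe by blast
      qed
      then have "chi H \<le> k" by (rule chi_le)
      then show ?thesis by simp
    qed
  qed
  have sepG: "separating G et" unfolding separating_def
  proof (rule exI[of _ "verts G1"], rule exI[of _ X2], intro conjI)
    show "verts G1 \<subseteq> verts G" using VG by blast
    show "X2 \<subseteq> verts G" by (rule X2G)
    show "verts G = verts G1 \<union> X2" using VG et1 unfolding X2_def by blast
    show "edges G = edges (induced G (verts G1)) \<union> edges (induced G X2)"
    proof
      show "edges G \<subseteq> edges (induced G (verts G1)) \<union> edges (induced G X2)"
      proof
        fix x assume x: "x \<in> edges G"
        show "x \<in> edges (induced G (verts G1)) \<union> edges (induced G X2)"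
        proof (cases "x \<in> edges G1 - {et}")
          case True then have "x \<subseteq> verts G1" using E1 by blast
          then show ?thesis using x unfolding induced_def by simp
        next
          case False then have "x \<in> (edges G2 - I) \<union> N" using x EG by blast
          then have "x \<subseteq> X2" using EGX2 by blast
          then show ?thesis using x unfolding induced_def by simp
        qed
      qed
      show "edges (induced G (verts G1)) \<union> edges (induced G X2) \<subseteq> edges G"
        unfolding induced_def by auto
    qed
    show "verts G1 \<inter> X2 = et" using disj et1 unfolding X2_def by blast
    show "card et < card (verts G1)" using critical_card[OF crit1] assms(1,6) by simp
    have c2: "card (verts G2) \<ge> k+1" using critical_card[OF crit2] .
    have "card (verts G2 - {v}) \<ge> k" using c2 assms(7) fin2 by (simp add: card_Diff_singleton)
    moreover have "(verts G2 - {v}) \<inter> et = {}" using disj et1 by blast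
    moreover have "finite et" using ab by simp
    ultimately have "card X2 = card (verts G2 - {v}) + card et" unfolding X2_def
      using fin2 by (simp add: card_Un_disjoint)
    then show "card et < card X2" using \<open>card (verts G2 - {v}) \<ge> k\<close> assms(1,6) by simp
  qed
  show ?thesis using critG sepG assms(6) unfolding G_def by blast
qed

end
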